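(* Let $(X,\overline{x},\delta)$ be a pointed automaton over $\Sigma$. For $x\in X$ let $\nu\mathrm{C}(x,\delta)$ denote $\nu\mathrm{C}(X,x,\delta)$ and let $\mathsf{free}(X,\delta)$ be as in the context. (1) If every state of $X$ is reachable from $\overline{x}$, then $\mathsf{free}(X,\delta)\cong\nu\mathrm{C}(\overline{x},\delta)$. (2) $\mathsf{free}(X,\delta)\cong\prod_{x\in X}\nu\mathrm{C}(x,\delta)$, where the product is taken in $\mathrm{Alg}_r(G_1)$.
   Context: $\Sigma$ is a finite alphabet, $\Sigma^\ast$ the free monoid with empty word $\epsilon$. A pointed automaton is $(X,\overline{x},\delta)$ with $\overline{x}\in X$, $\delta:X\to X^\Sigma$, extended to words by $\delta(x)(\epsilon)=x$, $\delta(x)(wa)=\delta(\delta(x)(w))(a)$; it is reachable if every state is $\delta(\overline{x})(u)$ for some $u$. Morphisms preserve initial states and commute with transitions; $\mathrm{Alg}_r(G_1)$ is the category of reachable pointed automata (it is a preorder, and the product of a family in it is the reachable part, from the tuple of initial states, of the componentwise product automaton). For a state $y$, $\langle y\rangle=\{\delta(y)(u)\mid u\in\Sigma^\ast\}$. For a congruence $C$ on $\Sigma^\ast$, let $Q(C)$ be the pointed automaton $(\Sigma^\ast/C,[\epsilon]_C,\sigma)$ with $\sigma([w]_C)(a)=[wa]_C$. Define $\nu\mathrm{C}(X,\overline{x},\delta)=Q(\sim_{\overline{x}})$ where $u\sim_{\overline{x}}v$ iff $\delta(y)(u)=\delta(y)(v)$ for all $y\in\langle\overline{x}\rangle$ (the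 kernel of the transition monoid map of the reachable part). Define $\mathsf{free}(X,\delta)=Q(\ker\delta^\sharp)$ where $(u,v)\in\ker\delta^\sharp$ iff $\delta(x)(u)=\delta(x)(v)$ for all $x\in X$ ($\ker\delta^\sharp$ is the largest set of equations satisfied by $(X,\delta)$). *)

theory Defs
  imports Main
begin

type_synonym ('s, 'a) pautomaton = "'s set \<times> 's \<times> ('s \<Rightarrow> 'a \<Rightarrow> 's)"

definition states :: "('s, 'a) pautomaton \<Rightarrow> 's set" where
  "states A = fst A"
definition init :: "('s, 'a) pautomaton \<Rightarrow> 's" where
  "init A = fst (snd A)"
definition trans :: "('s, 'a) pautomaton \<Rightarrow> 's \<Rightarrow> 'a \<Rightarrow> 's" where
  "trans A = snd (snd A)"

definition dstar :: "('s \<Rightarrow> 'a \<Rightarrow> 's) \<Rightarrow> 's \<Rightarrow> 'a list \<Rightarrow> 's" where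
  "dstar d x w = foldl d x w"

definition is_pautomaton :: "('s, 'a) pautomaton \<Rightarrow> bool" where
  "is_pautomaton A \<longleftrightarrow> init A \<in> states A \<and>
     (\<forall>x\<in>states A. \<forall>a. trans A x a \<in> states A)"

definition generated :: "('s \<Rightarrow> 'a \<Rightarrow> 's) \<Rightarrow> 's \<Rightarrow> 's set" where
  "generated d y = {dstar d y u | u. True}"

definition reachable :: "('s, 'a) pautomaton \<Rightarrow> bool" where
  "reachable A \<longleftrightarrow> states A = generated (trans A) (init A)"

definition pa_iso :: "('s, 'a) pautomaton \<Rightarrow> ('t, 'a) pautomaton \<Rightarrow> bool" where
  "pa_iso A B \<longleftrightarrow> (\<exists>f. bij_betw f (states A) (states B) \<and> f (init A) = init B \<and>
     (\<forall>x\<in>states A. \<forall>a. f (trans A x a) = trans B (f x) a))"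

text \<open>Q(C) for a congruence C on words: states are the classes, initial state
  the class of the empty word, transition [w] a = [wa].\<close>
definition Qaut :: "('a list \<times> 'a list) set \<Rightarrow> ('a list set, 'a) pautomaton" where
  "Qaut C = (UNIV // C, C `` {[]}, (\<lambda>c a. \<Union>w\<in>c. C `` {w @ [a]}))"

definition simrel :: "('s \<Rightarrow> 'a \<Rightarrow> 's) \<Rightarrow> 's \<Rightarrow> ('a list \<times> 'a list) set" where
  "simrel d x0 = {(u, v). \<forall>y\<in>generated d x0. dstar d y u = dstar d y v}"

definition nuC :: "'s set \<Rightarrow> 's \<Rightarrow> ('s \<Rightarrow> 'a \<Rightarrow> 's) \<Rightarrow> ('a list set, 'a) pautomaton" where
  "nuC X x0 d = Qaut (simrel d x0)"

definition kerd :: "'s set \<Rightarrow> ('s \<Rightarrow> 'a \<Rightarrow> 's) \<Rightarrow> ('a list \<times> 'a list) set" where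
  "kerd X d = {(u, v). \<forall>x\<in>X. dstar d x u = dstar d x v}"

definition free :: "'s set \<Rightarrow> ('s \<Rightarrow> 'a \<Rightarrow> 's) \<Rightarrow> ('a list set, 'a) pautomaton" where
  "free X d = Qaut (kerd X d)"

text \<open>Product in Alg_r: reachable part (from the tuple of initial states) of the
  componentwise product; tuples are functions restricted to the index set I.\<close>
definition prod_r :: "'i set \<Rightarrow> ('i \<Rightarrow> ('s, 'a) pautomaton) \<Rightarrow> ('i \<Rightarrow> 's, 'a) pautomaton" where
  "prod_r I A =
    (let i0 = (\<lambda>i. if i \<in> I then init (A i) else undefined);
         tr = (\<lambda>f a. (\<lambda>i. if i \<in> I then trans (A i) (f i) a else undefined))
     in (generated tr i0, i0, tr))"

end

theory Submission
  imports Defs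
begin

lemma dstar_app: "dstar d x (u @ v) = dstar d (dstar d x u) v"
  by (simp add: dstar_def)

lemma dstar_snoc: "dstar d x (u @ [a]) = d (dstar d x u) a"
  by (simp add: dstar_def)

lemma dstar_nil[simp]: "dstar d x [] = x"
  by (simp add: dstar_def)

lemma simrel_kerd: "simrel d x = kerd (generated d x) d"
  by (simp add: simrel_def kerd_def)

lemma kerd_equiv: "equiv UNIV (kerd S d)"
  unfolding equiv_def refl_on_def sym_def Relation.trans_def kerd_def by auto

lemma kerd_cong: "(u, v) \<in> kerd S d \<Longrightarrow> (u @ [a], v @ [a]) \<in> kerd S d"
  unfolding kerd_def by (auto simp: dstar_snoc)

lemma Qaut_trans:
  assumes "equiv UNIV C" "\<And>u v a. (u, v) \<in> C \<Longrightarrow> (u @ [a], v @ [a]) \<in> C"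
  shows "trans (Qaut C) (C `` {w}) a = C `` {w @ [a]}"
proof -
  have "(\<Union>x\<in>C `` {w}. C `` {x @ [a]}) = C `` {w @ [a]}"
  proof
    show "(\<Union>x\<in>C `` {w}. C `` {x @ [a]}) \<subseteq> C `` {w @ [a]}"
    proof
      fix z assume "z \<in> (\<Union>x\<in>C `` {w}. C `` {x @ [a]})"
      then obtain x where x: "(w, x) \<in> C" "(x @ [a], z) \<in> C" by auto
      have "(w @ [a], x @ [a]) \<in> C" using assms(2) x(1) by blast
      then show "z \<in> C `` {w @ [a]}" using x(2) assms(1)
        unfolding equiv_def Relation.trans_def by blast
    qed
  next
    have "(w, w) \<in> C" using assms(1) unfolding equiv_def refl_on_def by blast
    then show "C `` {w @ [a]} \<subseteq> (\<Union>x\<in>C `` {w}. C `` {x @ [a]})" by blast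
  qed
  then show ?thesis by (simp add: Qaut_def trans_def)
qed

lemma kerd_trans: "trans (Qaut (kerd S d)) (kerd S d `` {w}) a = kerd S d `` {w @ [a]}"
  by (rule Qaut_trans[OF kerd_equiv kerd_cong])

lemma Qaut_states: "states (Qaut C) = {C `` {w} | w. True}"
  by (auto simp: Qaut_def states_def quotient_def)

lemma pa_iso_refl: "pa_iso A A"
  unfolding pa_iso_def by (rule exI[of _ id]) auto

theorem mainTheorem4:
  fixes X :: "'s set" and x0 :: 's and d :: "'s \<Rightarrow> 'a::finite \<Rightarrow> 's"
  assumes "is_pautomaton (X, x0, d)"
  shows "(reachable (X, x0, d) \<longrightarrow> pa_iso (free X d) (nuC X x0 d))
       \<and> pa_iso (free X d) (prod_r X (\<lambda>x. nuC X x d))"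
proof
  show "reachable (X, x0, d) \<longrightarrow> pa_iso (free X d) (nuC X x0 d)"
  proof
    assume "reachable (X, x0, d)"
    then have "X = generated d x0" by (simp add: reachable_def states_def init_def trans_def)
    then have "free X d = nuC X x0 d" by (simp add: free_def nuC_def simrel_kerd)
    then show "pa_iso (free X d) (nuC X x0 d)" by (simp add: pa_iso_refl)
  qed
next
  have clos: "\<And>x a. x \<in> X \<Longrightarrow> d x a \<in> X"
    using assms by (simp add: is_pautomaton_def states_def trans_def)
  have closw: "x \<in> X \<Longrightarrow> dstar d x w \<in> X" for x w
    by (induction w rule: rev_induct) (auto simp: dstar_snoc clos)
  have gen_sub: "x \<in> X \<Longrightarrow> generated d x \<subseteq> X" for x
    using closw by (auto simp: generated_def)
  let ?K = "kerd X d"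
  let ?S = "\<lambda>i. simrel d i"
  have Ksub: "i \<in> X \<Longrightarrow> ?K \<subseteq> ?S i" for i
    using gen_sub[of i] by (auto simp: simrel_def kerd_def)
  define P where "P w = (\<lambda>i. if i \<in> X then ?S i `` {w} else undefined)" for w
  define i0 where "i0 = (\<lambda>i. if i \<in> X then init (nuC X i d) else undefined)"
  define tr where "tr = (\<lambda>f a. (\<lambda>i. if i \<in> X then trans (nuC X i d) (f i) a else undefined))"
  have prod_eq: "prod_r X (\<lambda>x. nuC X x d) = (generated tr i0, i0, tr)"
    by (simp add: prod_r_def i0_def tr_def Let_def)
  have i0P: "i0 = P []"
    unfolding i0_def P_def nuC_def Qaut_def init_def by (simp only: fst_conv snd_conv)
  have trP: "tr (P w) a = P (w @ [a])" for w a
    by (intro ext) (auto simp: tr_def P_def nuC_def simrel_kerd kerd_trans)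
  have dP: "dstar tr i0 w = P w" for w
    by (induction w rule: rev_induct) (auto simp: dstar_snoc i0P trP)
  have genP: "generated tr i0 = range P"
    by (auto simp: generated_def dP)
  define f where "f c = (\<lambda>i. if i \<in> X then (\<Union>w\<in>c. ?S i `` {w}) else undefined)" for c
  have fP: "f (?K `` {u}) = P u" for u
  proof -
    have "(\<Union>w\<in>?K `` {u}. ?S i `` {w}) = ?S i `` {u}" if "i \<in> X" for i
    proof -
      have eq: "equiv UNIV (?S i)" by (simp add: simrel_kerd kerd_equiv)
      have "?S i `` {w} = ?S i `` {u}" if "w \<in> ?K `` {u}" for w
        using that Ksub[OF \<open>i \<in> X\<close>] equiv_class_eq[OF eq, of u w] by blast
      moreover have "u \<in> ?K `` {u}" using kerd_equiv[of X d]
        unfolding equiv_def refl_on_def by blast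
      ultimately show ?thesis by blast
    qed
    then show ?thesis by (intro ext) (auto simp: f_def P_def)
  qed
  have inj: "P u = P v \<Longrightarrow> (u, v) \<in> ?K" for u v
  proof -
    assume h: "P u = P v"
    show "(u, v) \<in> ?K" unfolding kerd_def
    proof (clarsimp)
      fix x assume x: "x \<in> X"
      have "?S x `` {u} = ?S x `` {v}" using fun_cong[OF h, of x] x by (simp add: P_def)
      moreover have "equiv UNIV (?S x)" by (simp add: simrel_kerd kerd_equiv)
      ultimately have "(u, v) \<in> ?S x" by (rule eq_equiv_class) simp
      moreover have "x \<in> generated d x" unfolding generated_def by (intro CollectI exI[of _ "[]"]) simp
      ultimately show "dstar d x u = dstar d x v" by (auto simp: simrel_def)
    qed
  qed
  have sts: "states (free X d) = {?K `` {w} | w. True}"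
    by (simp add: free_def Qaut_states)
  show "pa_iso (free X d) (prod_r X (\<lambda>x. nuC X x d))"
    unfolding pa_iso_def prod_eq
  proof (intro exI[of _ f] conjI ballI allI)
    show "bij_betw f (states (free X d)) (states (generated tr i0, i0, tr))"
      unfolding bij_betw_def
    proof
      show "inj_on f (states (free X d))"
      proof (rule inj_onI)
        fix c1 c2 assume "c1 \<in> states (free X d)" "c2 \<in> states (free X d)" "f c1 = f c2"
        then obtain u v where uv: "c1 = ?K `` {u}" "c2 = ?K `` {v}" "P u = P v"
          using sts fP by auto
        then have "(u, v) \<in> ?K" using inj by blast
        then show "c1 = c2" using uv(1,2) equiv_class_eq[OF kerd_equiv] by simp
      qed
      show "f ` states (free X d) = states (generated tr i0, i0, tr)"
      proof -
        have "f ` states (free X d) = range P" unfolding sts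
          by (auto simp: fP) (metis (mono_tags, lifting) fP image_eqI mem_Collect_eq)
        then show ?thesis by (simp add: states_def genP)
      qed
    qed
    show "f (init (free X d)) = init (generated tr i0, i0, tr)"
      using fP[of "[]"] by (simp add: free_def Qaut_def init_def i0P)
  next
    fix x a assume "x \<in> states (free X d)"
    then obtain w where w: "x = ?K `` {w}" using sts by auto
    have "trans (free X d) x a = ?K `` {w @ [a]}"
      by (simp add: w free_def kerd_trans)
    then show "f (trans (free X d) x a) = trans (generated tr i0, i0, tr) (f x) a"
      by (simp add: fP w trans_def trP)
  qed
qed

end
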